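(* Let $n\ge1$, $m=2^n$, let $\mathcal{B}$ be the boolean algebra of rank $r\ge1$, and let $A\subsetneq\{0,1\}^n$ with $a=|A|$. If $m-a\le r$, then the solution set $Y=V_{\mathcal{B}}(S_A)$ of the orthogonal system $S_A$ is irreducible over $\mathcal{B}$.
   Context: A finite boolean algebra of rank $r$ is (isomorphic to) the power set algebra of an $r$-element set, in the language $\{\vee,\cdot,\bar{\ },0,1\}$. Orthogonal variables: $Z=\{z_\alpha:\alpha\in\{0,1\}^n\}$, $|Z|=m=2^n$. For $A\subseteq\{0,1\}^n$ the orthogonal system is $$S_A=\{z_\alpha=0\mid\alpha\in A\}\cup\{z_\alpha z_\beta=0\mid \alpha\ne\beta\}\cup\{\textstyle\bigvee_{\alpha}z_\alpha=1\}.$$ $V_{\mathcal{B}}(S)\subseteq\mathcal{B}^m$ is the solution set of $S$. A subset of $\mathcal{B}^m$ is algebraic if it is the solution set of some system of equations $t=s$ ($t,s$ terms in $Z$). A nonempty algebraic set is irreducible if it is not a finite union of proper algebraic subsets. *)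

theory Defs
  imports Main "HOL-Library.FuncSet"
begin

datatype 'v bterm = BVar 'v | BJoin "'v bterm" "'v bterm" | BMeet "'v bterm" "'v bterm"
  | BCompl "'v bterm" | BZero | BOne

fun beval :: "'u set \<Rightarrow> ('v \<Rightarrow> 'u set) \<Rightarrow> 'v bterm \<Rightarrow> 'u set" where
  "beval U p (BVar x) = p x"
| "beval U p (BJoin t s) = beval U p t \<union> beval U p s"
| "beval U p (BMeet t s) = beval U p t \<inter> beval U p s"
| "beval U p (BCompl t) = U - beval U p t"
| "beval U p BZero = {}"
| "beval U p BOne = U"

definition bpoints :: "'u set \<Rightarrow> 'v set \<Rightarrow> ('v \<Rightarrow> 'u set) set" where
  "bpoints U X = X \<rightarrow>\<^sub>E Pow U"

definition bsol :: "'u set \<Rightarrow> 'v set \<Rightarrow> ('v bterm \<times> 'v bterm) set \<Rightarrow> ('v \<Rightarrow> 'u set) set" where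
  "bsol U X S = {p \<in> bpoints U X. \<forall>(t, s) \<in> S. beval U p t = beval U p s}"

definition balgebraic :: "'u set \<Rightarrow> 'v set \<Rightarrow> ('v \<Rightarrow> 'u set) set \<Rightarrow> bool" where
  "balgebraic U X Y \<longleftrightarrow> (\<exists>S. (\<forall>(t, s) \<in> S. set_bterm t \<subseteq> X \<and> set_bterm s \<subseteq> X) \<and> Y = bsol U X S)"

definition birreducible :: "'u set \<Rightarrow> 'v set \<Rightarrow> ('v \<Rightarrow> 'u set) set \<Rightarrow> bool" where
  "birreducible U X Y \<longleftrightarrow> Y \<noteq> {} \<and> balgebraic U X Y \<and>
     \<not> (\<exists>F. finite F \<and> (\<forall>Z \<in> F. balgebraic U X Z \<and> Z \<subset> Y) \<and> Y = \<Union>F)"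

(* {0,1}^n as boolean lists of length n *)
definition cube :: "nat \<Rightarrow> bool list set" where
  "cube n = {xs. length xs = n}"

definition bjoin_list :: "'v list \<Rightarrow> 'v bterm" where
  "bjoin_list vs = foldr (\<lambda>v t. BJoin (BVar v) t) vs BZero"

definition orth_system :: "nat \<Rightarrow> bool list set \<Rightarrow> (bool list bterm \<times> bool list bterm) set" where
  "orth_system n A =
     {(BVar \<alpha>, BZero) | \<alpha>. \<alpha> \<in> A}
   \<union> {(BMeet (BVar \<alpha>) (BVar \<beta>), BZero) | \<alpha> \<beta>. \<alpha> \<in> cube n \<and> \<beta> \<in> cube n \<and> \<alpha> \<noteq> \<beta>}
   \<union> {(bjoin_list (List.n_lists n [False, True]), BOne)}"

end

theory Submission
  imports Defs
begin

lemma beval_bjoin_list: "beval U q (bjoin_list vs) = (\<Union>v\<in>set vs. q v)"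
  by (induction vs) (auto simp: bjoin_list_def)

lemma set_bjoin_list: "set_bterm (bjoin_list vs) = set vs"
  by (induction vs) (auto simp: bjoin_list_def)

lemma set_cube_lists: "set (List.n_lists n [False, True]) = cube n"
  by (auto simp: set_n_lists cube_def)

lemma orth_iff:
  "q \<in> bsol U (cube n) (orth_system n A) \<longleftrightarrow>
   q \<in> bpoints U (cube n) \<and> (\<forall>\<alpha>\<in>A. q \<alpha> = {}) \<and>
   (\<forall>\<alpha>\<in>cube n. \<forall>\<beta>\<in>cube n. \<alpha> \<noteq> \<beta> \<longrightarrow> q \<alpha> \<inter> q \<beta> = {}) \<and>
   (\<Union>\<alpha>\<in>cube n. q \<alpha>) = U"
proof -
  have "(\<forall>(t, s) \<in> orth_system n A. beval U q t = beval U q s) \<longleftrightarrow>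
     (\<forall>\<alpha>\<in>A. q \<alpha> = {}) \<and>
   (\<forall>\<alpha>\<in>cube n. \<forall>\<beta>\<in>cube n. \<alpha> \<noteq> \<beta> \<longrightarrow> q \<alpha> \<inter> q \<beta> = {}) \<and>
   (\<Union>\<alpha>\<in>cube n. q \<alpha>) = U"
  proof -
    have 1: "(\<forall>(t, s) \<in> {(BVar \<alpha>, BZero) | \<alpha>. \<alpha> \<in> A}. beval U q t = beval U q s)
       \<longleftrightarrow> (\<forall>\<alpha>\<in>A. q \<alpha> = {})"
    proof -
      have e: "{(BVar \<alpha>, BZero) | \<alpha>. \<alpha> \<in> A} = (\<lambda>\<alpha>. (BVar \<alpha>, BZero)) ` A" by auto
      show ?thesis unfolding e by simp
    qed
    have 2: "(\<forall>(t, s) \<in> {(BMeet (BVar \<alpha>) (BVar \<beta>), BZero) | \<alpha> \<beta>. \<alpha> \<in> cube n \<and> \<beta> \<in> cube n \<and> \<alpha> \<noteq> \<beta>}.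
        beval U q t = beval U q s)
       \<longleftrightarrow> (\<forall>\<alpha>\<in>cube n. \<forall>\<beta>\<in>cube n. \<alpha> \<noteq> \<beta> \<longrightarrow> q \<alpha> \<inter> q \<beta> = {})"
    proof -
      have e: "{(BMeet (BVar \<alpha>) (BVar \<beta>), BZero) | \<alpha> \<beta>. \<alpha> \<in> cube n \<and> \<beta> \<in> cube n \<and> \<alpha> \<noteq> \<beta>}
         = (\<lambda>(\<alpha>, \<beta>). (BMeet (BVar \<alpha>) (BVar \<beta>), BZero)) ` {(\<alpha>, \<beta>). \<alpha> \<in> cube n \<and> \<beta> \<in> cube n \<and> \<alpha> \<noteq> \<beta>}" by auto
      show ?thesis unfolding e by auto
    qed
    have 3: "(\<forall>(t, s) \<in> {(bjoin_list (List.n_lists n [False, True]), BOne)}. beval U q t = beval U q s)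
       \<longleftrightarrow> (\<Union>\<alpha>\<in>cube n. q \<alpha>) = U"
      by (simp add: beval_bjoin_list set_cube_lists)
    show ?thesis unfolding orth_system_def ball_Un 1 2 3 by blast
  qed
  thus ?thesis unfolding bsol_def mem_Collect_eq by (simp only:)
qed

lemma beval_sub:
  "set_bterm t \<subseteq> X \<Longrightarrow> q \<in> bpoints U X \<Longrightarrow> beval U q t \<subseteq> U"
  by (induction t) (auto simp: bpoints_def)

lemma beval_transfer:
  assumes "set_bterm t \<subseteq> X" "u \<in> U" "u' \<in> U"
    and "\<forall>x\<in>X. u \<in> q x \<longleftrightarrow> u' \<in> p x"
  shows "u \<in> beval U q t \<longleftrightarrow> u' \<in> beval U p t"
  using assms by (induction t) auto

theorem lemma1:
  fixes U :: "'u set" and n r :: nat and A :: "bool list set"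
  assumes "n \<ge> 1"
    and "finite U" and "card U = r" and "r \<ge> 1"
    and "A \<subset> cube n"
    and "2 ^ n - card A \<le> r"
  shows "birreducible U (cube n) (bsol U (cube n) (orth_system n A))"
proof -
  define Y where "Y = bsol U (cube n) (orth_system n A)"
  define C where "C = cube n - A"
  have fc: "finite (cube n)"
    using finite_lists_length_eq[of "UNIV::bool set" n] by (simp add: cube_def)
  have cc: "card (cube n) = 2 ^ n"
    using card_lists_length_eq[of "UNIV::bool set" n] by (simp add: cube_def)
  have Cne: "C \<noteq> {}" using assms(5) by (auto simp: C_def)
  have "card C = 2 ^ n - card A"
    unfolding C_def using assms(5) fc cc
    by (metis card_Diff_subset finite_subset psubset_imp_subset)
  hence "card C \<le> card U" using assms by simp
  then obtain f where f: "inj_on f C" "f ` C \<subseteq> U"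
    using card_le_inj[of C U] fc assms(2) C_def by auto
  obtain c0 where c0: "c0 \<in> C" using Cne by auto
  define g where "g u = (if u \<in> f ` C then inv_into C f u else c0)" for u
  have gC: "g u \<in> C" for u using c0 by (auto simp: g_def inv_into_into)
  have gsurj: "\<exists>u\<in>U. g u = \<alpha>" if "\<alpha> \<in> C" for \<alpha>
    using that f by (intro bexI[of _ "f \<alpha>"]) (auto simp: g_def)
  define p where "p \<alpha> = (if \<alpha> \<in> cube n then {u\<in>U. g u = \<alpha>} else undefined)" for \<alpha>
  have pY: "p \<in> Y"
    unfolding Y_def orth_iff
  proof (intro conjI)
    show "p \<in> bpoints U (cube n)" by (auto simp: bpoints_def p_def)
    show "\<forall>\<alpha>\<in>A. p \<alpha> = {}" using gC assms(5) by (auto simp: p_def C_def)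
    show "\<forall>\<alpha>\<in>cube n. \<forall>\<beta>\<in>cube n. \<alpha> \<noteq> \<beta> \<longrightarrow> p \<alpha> \<inter> p \<beta> = {}" by (auto simp: p_def)
    show "(\<Union>\<alpha>\<in>cube n. p \<alpha>) = U" using gC by (auto simp: p_def C_def)
  qed
  have pne: "p \<alpha> \<noteq> {}" if "\<alpha> \<in> C" for \<alpha>
    using gsurj[OF that] that by (auto simp: p_def C_def)
  have key: "Y \<subseteq> Z" if Zalg: "balgebraic U (cube n) Z" and ZY: "Z \<subseteq> Y" and pZ: "p \<in> Z" for Z
  proof
    fix q assume qY: "q \<in> Y"
    from Zalg obtain S where S: "\<forall>(t, s) \<in> S. set_bterm t \<subseteq> cube n \<and> set_bterm s \<subseteq> cube n"
      and Zd: "Z = bsol U (cube n) S" unfolding balgebraic_def by auto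
    have qp: "q \<in> bpoints U (cube n)" and qA: "\<forall>\<alpha>\<in>A. q \<alpha> = {}"
      and qd: "\<forall>\<alpha>\<in>cube n. \<forall>\<beta>\<in>cube n. \<alpha> \<noteq> \<beta> \<longrightarrow> q \<alpha> \<inter> q \<beta> = {}"
      and qu: "(\<Union>\<alpha>\<in>cube n. q \<alpha>) = U"
      using qY unfolding Y_def orth_iff by auto
    have pp: "p \<in> bpoints U (cube n)"
      and pd: "\<forall>\<alpha>\<in>cube n. \<forall>\<beta>\<in>cube n. \<alpha> \<noteq> \<beta> \<longrightarrow> p \<alpha> \<inter> p \<beta> = {}"
      and pu: "(\<Union>\<alpha>\<in>cube n. p \<alpha>) = U"
      using pY unfolding Y_def orth_iff by auto
    have pS: "\<forall>(t, s) \<in> S. beval U p t = beval U p s" using pZ Zd by (auto simp: bsol_def)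
    have "beval U q t = beval U q s" if ts: "(t, s) \<in> S" for t s
    proof -
      have tX: "set_bterm t \<subseteq> cube n" and sX: "set_bterm s \<subseteq> cube n" using S ts by auto
      have peq: "beval U p t = beval U p s" using pS ts by auto
      have "u \<in> beval U q t \<longleftrightarrow> u \<in> beval U q s" if uU: "u \<in> U" for u
      proof -
        obtain \<alpha> where a: "\<alpha> \<in> cube n" "u \<in> q \<alpha>" using qu uU by auto
        have aC: "\<alpha> \<in> C" using a qA by (auto simp: C_def)
        obtain u' where u': "u' \<in> p \<alpha>" using pne[OF aC] by auto
        have u'U: "u' \<in> U" using u' a(1) pu by blast
        have tr: "\<forall>x\<in>cube n. u \<in> q x \<longleftrightarrow> u' \<in> p x"
        proof
          fix x assume x: "x \<in> cube n"
          show "u \<in> q x \<longleftrightarrow> u' \<in> p x"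
          proof (cases "x = \<alpha>")
            case True thus ?thesis using a u' by simp
          next
            case False
            have "q \<alpha> \<inter> q x = {}" "p \<alpha> \<inter> p x = {}"
              using qd pd a(1) x False by auto
            thus ?thesis using a u' by blast
          qed
        qed
        show ?thesis
          using beval_transfer[OF tX uU u'U tr] beval_transfer[OF sX uU u'U tr] peq by auto
      qed
      moreover have "beval U q t \<subseteq> U" "beval U q s \<subseteq> U"
        using beval_sub[OF tX qp] beval_sub[OF sX qp] by auto
      ultimately show ?thesis by blast
    qed
    thus "q \<in> Z" unfolding Zd bsol_def using qp by auto
  qed
  have alg: "balgebraic U (cube n) Y"
    unfolding balgebraic_def Y_def
    by (intro exI[of _ "orth_system n A"])
       (use assms(5) in \<open>auto simp: orth_system_def set_bjoin_list set_cube_lists\<close>)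
  show ?thesis
    unfolding birreducible_def Y_def[symmetric]
  proof (intro conjI notI)
    show "Y = {} \<Longrightarrow> False" using pY by auto
    show "balgebraic U (cube n) Y" by (rule alg)
    assume "\<exists>F. finite F \<and> (\<forall>Z\<in>F. balgebraic U (cube n) Z \<and> Z \<subset> Y) \<and> Y = \<Union>F"
    then obtain F where F: "\<forall>Z\<in>F. balgebraic U (cube n) Z \<and> Z \<subset> Y" "Y = \<Union>F" by auto
    then obtain Z where Z: "Z \<in> F" "p \<in> Z" using pY by auto
    have Zp: "balgebraic U (cube n) Z" "Z \<subset> Y" using F(1) Z(1) by auto
    have "Y \<subseteq> Z" by (rule key[OF Zp(1) _ Z(2)]) (use Zp(2) in auto)
    thus False using Zp(2) by auto
  qed
qed

end
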